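(* Let $n\ge2$, $T_j>0$, and let $\vec w_j^*=\vec w_j^{(1,T_j)}$ be the winner-take-all prize structure, with $w^*_{j,1}=T_j$ and all other prizes $0$. Let $\vec w_j'$ be any prize structure with $w'_{j,1}\ge\dots\ge w'_{j,n}\ge0$ and $\sum_kw'_{j,k}\le T_j$. Then $x_{\vec w_j^*}$ single-crossing-dominates $x_{\vec w_j'}$.
   Context: Interim allocation function. For a prize structure $\vec w=(w_1,\dots,w_n)$, $x_{\vec w}(\phi):=\sum_{k=1}^n w_k\binom{n-1}{k-1}\phi^{k-1}(1-\phi)^{n-k}$ on $[0,1]$. In particular $x_{\vec w_j^*}(\phi)=T_j(1-\phi)^{n-1}$. Single-crossing. For functions $f,g$ on $[0,1]$, $f$ is single-crossing with respect to $g$ if there is $\phi_0\in[0,1]$ with $f\ge g$ on $[0,\phi_0)$ and $f\le g$ on $(\phi_0,1]$. Single-crossing dominance. An interim allocation function $x$ single-crossing-dominates $\tilde x$ if all of the following hold: 1. $\int_0^1x\ge\int_0^1\tilde x$; 2. $x$ is single-crossing with respect to $\tilde x$; 3. $-x'$ is single-crossing with respect to $-\tilde x'$. *)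

theory Defs
  imports "HOL-Analysis.Analysis"
begin

definition interim_alloc :: "nat \<Rightarrow> (nat \<Rightarrow> real) \<Rightarrow> real \<Rightarrow> real" where
  "interim_alloc n w \<phi> =
     (\<Sum>k=1..n. w k * real ((n - 1) choose (k - 1)) * \<phi> ^ (k - 1) * (1 - \<phi>) ^ (n - k))"

definition single_crossing :: "(real \<Rightarrow> real) \<Rightarrow> (real \<Rightarrow> real) \<Rightarrow> bool" where
  "single_crossing f g \<longleftrightarrow>
     (\<exists>\<phi>0\<in>{0..1}. (\<forall>\<phi>\<in>{0..<\<phi>0}. f \<phi> \<ge> g \<phi>) \<and> (\<forall>\<phi>\<in>{\<phi>0<..1}. f \<phi> \<le> g \<phi>))"

definition sc_dominates :: "(real \<Rightarrow> real) \<Rightarrow> (real \<Rightarrow> real) \<Rightarrow> bool" where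
  "sc_dominates x y \<longleftrightarrow>
     integral {0..1} x \<ge> integral {0..1} y \<and>
     single_crossing x y \<and>
     single_crossing (\<lambda>\<phi>. - deriv x \<phi>) (\<lambda>\<phi>. - deriv y \<phi>)"

definition wta :: "real \<Rightarrow> nat \<Rightarrow> real" where
  "wta T k = (if k = 1 then T else 0)"

end

theory Submission
  imports Defs
begin

definition bern :: "nat \<Rightarrow> nat \<Rightarrow> real \<Rightarrow> real" where
  "bern p j x = real (p choose j) * x ^ j * (1 - x) ^ (p - j)"

lemma ia_alt: "interim_alloc (Suc q) w x = (\<Sum>j\<le>q. w (Suc j) * bern q j x)"
proof -
  have "interim_alloc (Suc q) w x = (\<Sum>k=Suc 0..Suc q. w k * real (q choose (k - 1)) * x ^ (k - 1) * (1 - x) ^ (Suc q - k))"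
    by (simp add: interim_alloc_def)
  also have "\<dots> = (\<Sum>j=0..q. w (Suc j) * real (q choose j) * x ^ j * (1 - x) ^ (q - j))"
    by (subst sum.shift_bounds_cl_Suc_ivl) simp
  finally show ?thesis by (simp add: bern_def atMost_atLeast0 mult.assoc)
qed

lemma bern_big: "p < j \<Longrightarrow> bern p j x = 0"
  by (simp add: bern_def)

lemma bern_deriv0: "((\<lambda>x. bern (Suc p) 0 x) has_real_derivative - real (Suc p) * bern p 0 x) (at x)"
  unfolding bern_def 
  apply (rule derivative_eq_intros refl)+
  apply (cases p) apply (auto simp: algebra_simps)
  done

lemma bern_derivS: "((\<lambda>x. bern (Suc p) (Suc j) x) has_real_derivative real (Suc p) * (bern p j x - bern p (Suc j) x)) (at x)"
proof (cases "j \<le> p")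
  case False
  then show ?thesis by (simp add: bern_big)
next
  case True
  have c1: "real (Suc p choose Suc j) * real (Suc j) = real (Suc p) * real (p choose j)"
    using Suc_times_binomial_eq[of p j] by (metis of_nat_mult)
  have c2: "real (p - j) * real (Suc p choose Suc j) = real (Suc p) * real (p choose Suc j)"
    using binomial_absorb_comp[of "Suc p" "Suc j"] by (metis diff_Suc_1 diff_Suc_Suc of_nat_mult)
  show ?thesis
  proof (cases "j = p")
    case True
    have z: "p choose Suc p = 0" by simp
    from True show ?thesis unfolding bern_def
      apply (simp add: z)
      apply (auto intro!: derivative_eq_intros)
      apply (cases p) apply (auto simp: algebra_simps binomial_eq_0_iff)
      done
  next
    case False
    then have jp: "j < p" using \<open>j \<le> p\<close> by simp
    then obtain r where r: "p - j = Suc r" by (metis Suc_diff_Suc)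
    have r2: "p - Suc j = r" using r by simp
    have hp: "real p = real j + real r + 1" using r jp by linarith
    have pas: "real (Suc p choose Suc j) = real (p choose j) + real (p choose Suc j)" by simp
    have hb: "(real j + 1) * real (p choose Suc j) = (real r + 1) * real (p choose j)"
      using c1 pas hp by (simp add: algebra_simps)
    have key: "x^j * (1-x)^r * ((real j + 1) * real (p choose Suc j)) = x^j * (1-x)^r * ((real r + 1) * real (p choose j))"
      using hb by simp
    show ?thesis unfolding bern_def r2
      apply (simp only: diff_Suc_Suc r)
      apply (rule derivative_eq_intros refl)+
      apply (simp add: algebra_simps)
      using key hp by (simp add: algebra_simps)
  qed
qed
definition dbern :: "nat \<Rightarrow> nat \<Rightarrow> real \<Rightarrow> real" where
  "dbern p j x = (if j = 0 then - real (Suc p) * bern p 0 x else real (Suc p) * (bern p (j - 1) x - bern p j x))"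

lemma bern_deriv: "((\<lambda>x. bern (Suc p) j x) has_real_derivative dbern p j x) (at x)"
  using bern_deriv0[of p x] bern_derivS[of p "j - 1" x] by (cases j) (simp_all add: dbern_def)

lemma ia_deriv: "(interim_alloc (Suc (Suc p)) v has_real_derivative
    real (Suc p) * interim_alloc (Suc p) (\<lambda>k. v (Suc k) - v k) x) (at x)"
proof -
  have eq: "interim_alloc (Suc (Suc p)) v = (\<lambda>x. \<Sum>j\<le>Suc p. v (Suc j) * bern (Suc p) j x)"
    by (rule ext, rule ia_alt)
  have d: "(interim_alloc (Suc (Suc p)) v has_real_derivative (\<Sum>j\<le>Suc p. v (Suc j) * dbern p j x)) (at x)"
    unfolding eq by (intro DERIV_sum DERIV_cmult bern_deriv)
  have s1: "(\<Sum>j\<le>Suc p. v (Suc j) * dbern p j x) = v 1 * dbern p 0 x + (\<Sum>i\<le>p. v (Suc (Suc i)) * dbern p (Suc i) x)"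
    by (subst sum.atMost_Suc_shift) simp
  have s2: "(\<Sum>i\<le>Suc p. v (Suc i) * bern p i x) = v 1 * bern p 0 x + (\<Sum>i\<le>p. v (Suc (Suc i)) * bern p (Suc i) x)"
    by (subst sum.atMost_Suc_shift) simp
  have s3: "(\<Sum>i\<le>Suc p. v (Suc i) * bern p i x) = (\<Sum>i\<le>p. v (Suc i) * bern p i x)"
    by (simp add: bern_big)
  have "(\<Sum>j\<le>Suc p. v (Suc j) * dbern p j x) = real (Suc p) * ((\<Sum>i\<le>p. v (Suc (Suc i)) * bern p i x)
        - (v 1 * bern p 0 x + (\<Sum>i\<le>p. v (Suc (Suc i)) * bern p (Suc i) x)))"
    unfolding s1 by (simp add: dbern_def sum_distrib_left sum_subtractf algebra_simps)
  also have "\<dots> = real (Suc p) * interim_alloc (Suc p) (\<lambda>k. v (Suc k) - v k) x"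
    unfolding ia_alt s2[symmetric] s3 by (simp add: sum_subtractf algebra_simps)
  finally show ?thesis using d by simp
qed

lemma ia_at0: "interim_alloc (Suc q) w 0 = w 1"
  by (cases q) (simp_all add: ia_alt bern_def sum.atMost_Suc_shift del: sum.atMost_Suc)

lemma ia_at1: "interim_alloc (Suc q) w 1 = w (Suc q)"
proof (cases q)
  case 0 then show ?thesis by (simp add: ia_alt bern_def)
next
  case (Suc r)
  have "(\<Sum>j\<le>r. w (Suc j) * bern (Suc r) j 1) = 0"
    by (intro sum.neutral) (simp add: bern_def)
  then show ?thesis using Suc by (simp add: ia_alt bern_def)
qed

lemma ia_scale: "c * interim_alloc m w x = interim_alloc m (\<lambda>k. c * w k) x"
  by (simp add: interim_alloc_def sum_distrib_left mult.assoc)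

lemma ia_cong: "(\<And>k. 1 \<le> k \<Longrightarrow> k \<le> m \<Longrightarrow> w k = w' k) \<Longrightarrow> interim_alloc m w x = interim_alloc m w' x"
  unfolding interim_alloc_def by (intro sum.cong) auto

lemma ia_integral: "integral {0..1} (interim_alloc (Suc p) w) = (\<Sum>k=1..Suc p. w k) / real (Suc p)"
proof -
  define v where "v k = (\<Sum>i\<in>{1..<k}. w i) / real (Suc p)" for k
  have dv: "real (Suc p) * (v (Suc k) - v k) = w k" if "1 \<le> k" for k
  proof -
    have "{1..<Suc k} = insert k {1..<k}" using that by auto
    then have "v (Suc k) - v k = w k / real (Suc p)" using that
      by (simp add: v_def diff_divide_distrib[symmetric])
    then show ?thesis by simp
  qed
  have D: "(interim_alloc (Suc (Suc p)) v has_real_derivative interim_alloc (Suc p) w x) (at x)" for x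
  proof -
    have "real (Suc p) * interim_alloc (Suc p) (\<lambda>k. v (Suc k) - v k) x = interim_alloc (Suc p) w x"
      unfolding ia_scale by (rule ia_cong) (rule dv, simp)
    then show ?thesis using ia_deriv[of p v x] by simp
  qed
  have "(interim_alloc (Suc p) w has_integral
        interim_alloc (Suc (Suc p)) v 1 - interim_alloc (Suc (Suc p)) v 0) {0..1}"
    by (rule fundamental_theorem_of_calculus)
       (auto simp: has_real_derivative_iff_has_vector_derivative[symmetric] intro: DERIV_subset[OF D])
  moreover have "interim_alloc (Suc (Suc p)) v 1 - interim_alloc (Suc (Suc p)) v 0 = (\<Sum>k=1..Suc p. w k) / real (Suc p)"
    unfolding ia_at0 ia_at1 v_def by (simp add: atLeastLessThanSuc_atLeastAtMost)
  ultimately show ?thesis using integral_unique by metis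
qed

lemma sc_intro:
  assumes "\<And>a b. 0 \<le> a \<Longrightarrow> a < b \<Longrightarrow> b \<le> 1 \<Longrightarrow> f a < g a \<Longrightarrow> f b \<le> g b"
  shows "single_crossing f g"
proof (cases "{a\<in>{0..1}. f a < g a} = {}")
  case True
  show ?thesis unfolding single_crossing_def
    by (rule bexI[of _ 1]) (use True in \<open>auto simp: not_less\<close>)
next
  case False
  define A where "A = {a\<in>{0..1}. f a < g a}"
  have ne: "A \<noteq> {}" using False A_def by simp
  have bdd: "bdd_below A" unfolding A_def by (rule bdd_belowI[of _ 0]) auto
  have i0: "0 \<le> Inf A" using ne by (intro cInf_greatest) (auto simp: A_def)
  obtain a0 where "a0 \<in> A" using ne by blast
  then have i1: "Inf A \<le> 1" using cInf_lower[OF _ bdd, of a0] by (auto simp: A_def)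
  show ?thesis unfolding single_crossing_def
  proof (rule bexI[of _ "Inf A"], intro conjI ballI)
    fix x assume x: "x \<in> {0..<Inf A}"
    show "g x \<le> f x"
    proof (rule ccontr)
      assume "\<not> g x \<le> f x"
      then have "x \<in> A" using x i1 by (auto simp: A_def)
      then have "Inf A \<le> x" using cInf_lower[OF _ bdd] by blast
      then show False using x by simp
    qed
  next
    fix x assume x: "x \<in> {Inf A<..1}"
    then have "Inf A < x" by simp
    then obtain a where a: "a \<in> A" "a < x" using cInf_less_iff[OF ne bdd] by blast
    show "f x \<le> g x" using assms[of a x] a x by (auto simp: A_def)
  qed (use i0 i1 in auto)
qed

lemma ia_ratio:
  assumes "0 \<le> x" "x < 1"
  shows "interim_alloc (Suc q) c x = (1-x)^q * (\<Sum>j\<le>q. c (Suc j) * real (q choose j) * (x/(1-x))^j)"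
  unfolding ia_alt sum_distrib_left
proof (rule sum.cong[OF refl])
  fix j assume "j \<in> {..q}"
  then have "(1-x)^q = (1-x)^j * (1-x)^(q-j)" by (simp add: power_add[symmetric])
  moreover have "(1-x)^j > 0" using assms by simp
  ultimately show "c (Suc j) * bern q j x = (1 - x) ^ q * (c (Suc j) * real (q choose j) * (x / (1 - x)) ^ j)"
    using assms by (simp add: bern_def power_divide field_simps)
qed

lemma ia_wta: "interim_alloc (Suc q) (wta S) x = S * (1-x)^q"
  by (cases q) (simp_all add: ia_alt wta_def bern_def sum.atMost_Suc_shift del: sum.atMost_Suc)

lemma crossing:
  assumes c: "\<And>k. 1 \<le> k \<Longrightarrow> k \<le> Suc q \<Longrightarrow> c k \<ge> 0"
  shows "single_crossing (interim_alloc (Suc q) (wta S)) (interim_alloc (Suc q) c)"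
proof (rule sc_intro)
  fix a b :: real assume ab: "0 \<le> a" "a < b" "b \<le> 1"
    and lt: "interim_alloc (Suc q) (wta S) a < interim_alloc (Suc q) c a"
  define R where "R x = (\<Sum>j\<le>q. c (Suc j) * real (q choose j) * (x/(1-x))^j)" for x
  have pa: "(1-a)^q > 0" using ab by simp
  have ga: "interim_alloc (Suc q) c a = (1-a)^q * R a"
    unfolding R_def using ia_ratio[OF ab(1) order.strict_trans2[OF ab(2) ab(3)]] by blast
  have SR: "S < R a"
    using lt unfolding ia_wta ga using pa by (simp add: mult.commute)
  show "interim_alloc (Suc q) (wta S) b \<le> interim_alloc (Suc q) c b"
  proof (cases "b < 1")
    case True
    have fr: "a/(1-a) \<le> b/(1-b)" using ab True by (intro frac_le) auto
    have "R a \<le> R b" unfolding R_def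
    proof (rule sum_mono)
      fix j assume "j \<in> {..q}"
      then have "c (Suc j) * real (q choose j) \<ge> 0" using c[of "Suc j"] by simp
      moreover have "(a/(1-a))^j \<le> (b/(1-b))^j" using fr ab True by (intro power_mono) auto
      ultimately show "c (Suc j) * real (q choose j) * (a/(1-a))^j \<le> c (Suc j) * real (q choose j) * (b/(1-b))^j"
        by (intro mult_left_mono) auto
    qed
    then have "S * (1-b)^q \<le> R b * (1-b)^q" using SR True by (intro mult_right_mono) auto
    moreover have "interim_alloc (Suc q) c b = (1-b)^q * R b"
      unfolding R_def using ia_ratio[OF _ True] ab by simp
    ultimately show ?thesis unfolding ia_wta by (simp add: mult.commute)
  next
    case False
    then have b1: "b = 1" using ab by simp
    show ?thesis
    proof (cases q)
      case 0
      then show ?thesis using lt by (simp add: interim_alloc_def wta_def)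
    next
      case (Suc r)
      then show ?thesis using b1 c[of "Suc q"] by (simp add: ia_at1 wta_def)
    qed
  qed
qed

lemma neg_deriv_ia: "(\<lambda>x. - deriv (interim_alloc (Suc (Suc p)) w) x) =
   interim_alloc (Suc p) (\<lambda>k. real (Suc p) * (w k - w (Suc k)))"
proof
  fix x
  have "- deriv (interim_alloc (Suc (Suc p)) w) x = - (real (Suc p) * interim_alloc (Suc p) (\<lambda>k. w (Suc k) - w k) x)"
    using DERIV_imp_deriv[OF ia_deriv] by simp
  also have "\<dots> = (- real (Suc p)) * interim_alloc (Suc p) (\<lambda>k. w (Suc k) - w k) x" by (rule minus_mult_left)
  also have "\<dots> = interim_alloc (Suc p) (\<lambda>k. (- real (Suc p)) * (w (Suc k) - w k)) x" by (rule ia_scale)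
  also have "\<dots> = interim_alloc (Suc p) (\<lambda>k. real (Suc p) * (w k - w (Suc k))) x"
    by (rule ia_cong) (simp add: algebra_simps)
  finally show "- deriv (interim_alloc (Suc (Suc p)) w) x = interim_alloc (Suc p) (\<lambda>k. real (Suc p) * (w k - w (Suc k))) x" .
qed

theorem mainTheorem8:
  fixes n :: nat and T :: real and w' :: "nat \<Rightarrow> real"
  assumes "n \<ge> 2" and "T > 0"
    and "\<And>k. 1 \<le> k \<Longrightarrow> k < n \<Longrightarrow> w' k \<ge> w' (k + 1)"
    and "w' n \<ge> 0"
    and "(\<Sum>k=1..n. w' k) \<le> T"
  shows "sc_dominates (interim_alloc n (wta T)) (interim_alloc n w')"
proof -
  obtain p where n: "n = Suc (Suc p)" using assms(1) by (metis add_2_eq_Suc le_Suc_ex)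
  have mono: "w' k \<ge> w' n" if "1 \<le> k" "k \<le> n" for k
    using that(2)
  proof (induction k rule: inc_induct)
    case base then show ?case by simp
  next
    case (step m) then show ?case using assms(3)[of m] that(1) by simp
  qed
  have nn: "w' k \<ge> 0" if "1 \<le> k" "k \<le> n" for k using mono[OF that] assms(4) by simp
  have sw: "(\<Sum>k=1..n. wta T k) = T" using n by (simp add: wta_def sum.delta)
  have I: "integral {0..1} (interim_alloc n (wta T)) \<ge> integral {0..1} (interim_alloc n w')"
    unfolding n ia_integral using sw assms(5) n by (simp add: divide_right_mono)
  have S1: "single_crossing (interim_alloc n (wta T)) (interim_alloc n w')"
    unfolding n by (rule crossing) (use nn n in simp)
  have eqs: "interim_alloc (Suc p) (\<lambda>k. real (Suc p) * (wta T k - wta T (Suc k))) = interim_alloc (Suc p) (wta (real (Suc p) * T))"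
    by (rule ext, rule ia_cong) (auto simp: wta_def)
  have S2: "single_crossing (\<lambda>x. - deriv (interim_alloc n (wta T)) x) (\<lambda>x. - deriv (interim_alloc n w') x)"
    unfolding n neg_deriv_ia eqs
    by (rule crossing) (use assms(3) n in simp)
  show ?thesis unfolding sc_dominates_def using I S1 S2 by blast
qed

end
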